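(* An eventually dendric shift space is minimal if and only if it is irreducible.
   Context: $A$ is a finite alphabet; a shift space is a closed subset $X\subseteq A^{\mathbb Z}$ with $\sigma(X)=X$; $\mathcal L(X)$ is its set of finite factors. $X$ is irreducible if for all $u,v\in\mathcal L(X)$ there is $w$ with $uwv\in\mathcal L(X)$. A nonempty shift space is minimal if it contains no nonempty shift space other than itself. For $w\in\mathcal L(X)$, the extension graph $\mathcal E_1(w)$ is the undirected bipartite graph with vertex set the disjoint union of $\{a\in A: aw\in\mathcal L(X)\}$ and $\{b\in A: wb\in\mathcal L(X)\}$, with an edge $(a,b)$ iff $awb\in\mathcal L(X)$; $X$ is eventually dendric if for some $m\ge0$, $\mathcal E_1(w)$ is a tree for every $w\in\mathcal L(X)$ of length $\ge m$. *)

theory Defs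
  imports "HOL-Analysis.Analysis"
begin

definition shift :: "(int \<Rightarrow> 'a) \<Rightarrow> (int \<Rightarrow> 'a)" where
  "shift x = (\<lambda>n. x (n + 1))"

definition full_shift_topology :: "'a set \<Rightarrow> (int \<Rightarrow> 'a) topology" where
  "full_shift_topology A = product_topology (\<lambda>_. discrete_topology A) UNIV"

definition shift_space :: "'a set \<Rightarrow> (int \<Rightarrow> 'a) set \<Rightarrow> bool" where
  "shift_space A X \<longleftrightarrow>
     X \<subseteq> {x. \<forall>n. x n \<in> A} \<and> closedin (full_shift_topology A) X \<and> shift ` X = X"

definition language :: "(int \<Rightarrow> 'a) set \<Rightarrow> 'a list set" where
  "language X = {w. \<exists>x\<in>X. \<exists>i::int. w = map (\<lambda>k. x (i + int k)) [0..<length w]}"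

definition irreducible_shift :: "(int \<Rightarrow> 'a) set \<Rightarrow> bool" where
  "irreducible_shift X \<longleftrightarrow>
     (\<forall>u\<in>language X. \<forall>v\<in>language X. \<exists>w. u @ w @ v \<in> language X)"

definition minimal_shift :: "'a set \<Rightarrow> (int \<Rightarrow> 'a) set \<Rightarrow> bool" where
  "minimal_shift A X \<longleftrightarrow> shift_space A X \<and> X \<noteq> {} \<and>
     (\<forall>Y. shift_space A Y \<and> Y \<noteq> {} \<and> Y \<subseteq> X \<longrightarrow> Y = X)"

definition uadj :: "('v \<times> 'v) set \<Rightarrow> 'v \<Rightarrow> 'v \<Rightarrow> bool" where
  "uadj E u v \<longleftrightarrow> (u, v) \<in> E \<or> (v, u) \<in> E"

definition ugraph_connected :: "'v set \<Rightarrow> ('v \<times> 'v) set \<Rightarrow> bool" where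
  "ugraph_connected V E \<longleftrightarrow> V \<noteq> {} \<and>
     (\<forall>u\<in>V. \<forall>v\<in>V. (u, v) \<in> {(p, q). p \<in> V \<and> q \<in> V \<and> uadj E p q}\<^sup>*)"

definition ugraph_acyclic :: "'v set \<Rightarrow> ('v \<times> 'v) set \<Rightarrow> bool" where
  "ugraph_acyclic V E \<longleftrightarrow> \<not> (\<exists>cs. 3 \<le> length cs \<and> distinct cs \<and> set cs \<subseteq> V \<and>
     (\<forall>i < length cs. uadj E (cs ! i) (cs ! ((i + 1) mod length cs))))"

definition ugraph_tree :: "'v set \<Rightarrow> ('v \<times> 'v) set \<Rightarrow> bool" where
  "ugraph_tree V E \<longleftrightarrow> ugraph_connected V E \<and> ugraph_acyclic V E"

text \<open>Extension graph \<open>\<E>\<^sub>1(w)\<close>: left extensions tagged \<open>Inl\<close>, right ones \<open>Inr\<close>.\<close>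
definition left_ext :: "(int \<Rightarrow> 'a) set \<Rightarrow> 'a list \<Rightarrow> 'a set" where
  "left_ext X w = {a. a # w \<in> language X}"

definition right_ext :: "(int \<Rightarrow> 'a) set \<Rightarrow> 'a list \<Rightarrow> 'a set" where
  "right_ext X w = {b. w @ [b] \<in> language X}"

definition ext_vertices :: "(int \<Rightarrow> 'a) set \<Rightarrow> 'a list \<Rightarrow> ('a + 'a) set" where
  "ext_vertices X w = Inl ` left_ext X w \<union> Inr ` right_ext X w"

definition ext_edges :: "(int \<Rightarrow> 'a) set \<Rightarrow> 'a list \<Rightarrow> (('a + 'a) \<times> ('a + 'a)) set" where
  "ext_edges X w = {(Inl a, Inr b) | a b. a # w @ [b] \<in> language X}"

definition eventually_dendric :: "(int \<Rightarrow> 'a) set \<Rightarrow> bool" where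
  "eventually_dendric X \<longleftrightarrow> (\<exists>m::nat. \<forall>w\<in>language X. m \<le> length w \<longrightarrow>
     ugraph_tree (ext_vertices X w) (ext_edges X w))"

end

theory Submission
  imports Defs
begin


definition win :: "(int \<Rightarrow> 'a) \<Rightarrow> int \<Rightarrow> nat \<Rightarrow> 'a list" where
  "win x i n = map (\<lambda>k. x (i + int k)) [0..<n]"

lemma length_win[simp]: "length (win x i n) = n" by (simp add: win_def)

lemma nth_win[simp]: "k < n \<Longrightarrow> win x i n ! k = x (i + int k)" by (simp add: win_def)

lemma lang_iff: "w \<in> language Z \<longleftrightarrow> (\<exists>x\<in>Z. \<exists>i. w = win x i (length w))"
  by (simp add: language_def win_def)

lemma win_add: "win x i (m + n) = win x i m @ win x (i + int m) n"
  by (rule nth_equalityI) (auto simp: nth_append algebra_simps)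

lemma win_Suc_left: "win x i (Suc n) = x i # win x (i + 1) n"
  by (rule nth_equalityI) (auto simp: nth_Cons algebra_simps split: nat.splits)

lemma win_Suc_right: "win x i (Suc n) = win x i n @ [x (i + int n)]"
  using win_add[of x i n 1] by (simp add: win_def)

lemma lang_prefix: "u @ v \<in> language Z \<Longrightarrow> u \<in> language Z"
proof -
  assume "u @ v \<in> language Z"
  then obtain x i where "x \<in> Z" "u @ v = win x i (length u + length v)" by (auto simp: lang_iff)
  then have "u = win x i (length u)" by (simp add: win_add)
  thus ?thesis using \<open>x\<in>Z\<close> by (auto simp: lang_iff)
qed

lemma lang_suffix: "u @ v \<in> language Z \<Longrightarrow> v \<in> language Z"
proof -
  assume "u @ v \<in> language Z"
  then obtain x i where "x \<in> Z" "u @ v = win x i (length u + length v)" by (auto simp: lang_iff)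
  then have "v = win x (i + int (length u)) (length v)" by (simp add: win_add)
  thus ?thesis using \<open>x\<in>Z\<close> by (auto simp: lang_iff)
qed

lemma lang_factor: "u @ v @ w \<in> language Z \<Longrightarrow> v \<in> language Z"
  using lang_prefix lang_suffix by metis

lemma lang_left_ext: "w \<in> language Z \<Longrightarrow> \<exists>a. a # w \<in> language Z"
proof -
  assume "w \<in> language Z"
  then obtain x i where "x \<in> Z" "w = win x i (length w)" by (auto simp: lang_iff)
  then have "x (i - 1) # w = win x (i - 1) (length (x (i - 1) # w))" by (simp add: win_Suc_left)
  thus ?thesis using \<open>x\<in>Z\<close> by (auto simp: lang_iff)
qed

lemma lang_right_ext: "w \<in> language Z \<Longrightarrow> \<exists>b. w @ [b] \<in> language Z"
proof -
  assume "w \<in> language Z"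
  then obtain x i where "x \<in> Z" "w = win x i (length w)" by (auto simp: lang_iff)
  then have "w @ [x (i + int (length w))] = win x i (length (w @ [x (i + int (length w))]))"
    by (simp add: win_Suc_right)
  thus ?thesis using \<open>x\<in>Z\<close> by (auto simp: lang_iff)
qed

lemma lang_mono: "Y \<subseteq> Z \<Longrightarrow> language Y \<subseteq> language Z"
  unfolding language_def by blast

lemma lang_exists_len: "Z \<noteq> {} \<Longrightarrow> \<exists>w\<in>language Z. length w = n"
proof -
  assume "Z \<noteq> {}" then obtain x where "x \<in> Z" by auto
  then have "win x 0 n \<in> language Z" by (auto simp: lang_iff)
  thus ?thesis by (intro bexI[of _ "win x 0 n"]) auto
qed

lemma lang_letters: "Z \<subseteq> {x. \<forall>n. x n \<in> A} \<Longrightarrow> w \<in> language Z \<Longrightarrow> set w \<subseteq> A"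
proof
  fix c assume Z: "Z \<subseteq> {x. \<forall>n. x n \<in> A}" and "w \<in> language Z" and c: "c \<in> set w"
  then obtain x i where "x \<in> Z" "w = win x i (length w)" by (auto simp: lang_iff)
  then have "c \<in> set (win x i (length w))" using c by simp
  then obtain k where "c = x (i + int k)" by (auto simp: win_def)
  thus "c \<in> A" using Z \<open>x \<in> Z\<close> by auto
qed

lemma finite_lang_len: "finite A \<Longrightarrow> Z \<subseteq> {x. \<forall>n. x n \<in> A} \<Longrightarrow> finite {w\<in>language Z. length w = n}"
proof -
  assume "finite A" "Z \<subseteq> {x. \<forall>n. x n \<in> A}"
  then have "{w\<in>language Z. length w = n} \<subseteq> {w. set w \<subseteq> A \<and> length w = n}"
    using lang_letters by blast
  thus ?thesis using finite_lists_length_eq[OF \<open>finite A\<close>] finite_subset by blast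
qed

lemma topspace_fs: "topspace (full_shift_topology A) = {x. \<forall>n. x n \<in> A}"
  by (auto simp: full_shift_topology_def PiE_def extensional_def)

lemma shift_closed:
  assumes "shift ` Z = Z"
  shows "z \<in> Z \<Longrightarrow> (\<lambda>t. z (t + int n)) \<in> Z \<and> (\<lambda>t. z (t - int n)) \<in> Z"
proof (induction n arbitrary: z)
  case 0 thus ?case by simp
next
  case (Suc n)
  have a1: "(\<lambda>t. z (t + int n)) \<in> Z" and a2: "(\<lambda>t. z (t - int n)) \<in> Z" using Suc by auto
  have s1: "(\<lambda>t. z (t + int (Suc n))) = shift (\<lambda>t. z (t + int n))"
    by (rule ext) (simp add: shift_def algebra_simps)
  have r1: "(\<lambda>t. z (t + int (Suc n))) \<in> Z" unfolding s1 using a1 assms by (metis imageI)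
  obtain z0 where z0: "z0 \<in> Z" "shift z0 = (\<lambda>t. z (t - int n))" using a2 assms by (metis imageE)
  have "z0 = (\<lambda>t. z (t - int (Suc n)))"
  proof (rule ext)
    fix t
    have "shift z0 (t - 1) = z (t - 1 - int n)" using z0(2) by simp
    thus "z0 t = z (t - int (Suc n))" by (simp add: shift_def algebra_simps)
  qed
  then show ?case using r1 z0(1) by simp
qed

lemma shift_closed_int:
  assumes "shift ` Z = Z" "z \<in> Z"
  shows "(\<lambda>t. z (t + d)) \<in> Z"
proof (cases "d \<ge> 0")
  case True
  then have "d = int (nat d)" by simp
  then show ?thesis using shift_closed[OF assms(1) assms(2), of "nat d"] by metis
next
  case False
  then have "d = - int (nat (-d))" by simp
  then have "(\<lambda>t. z (t + d)) = (\<lambda>t. z (t - int (nat (-d))))" by (metis diff_conv_add_uminus)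
  then show ?thesis using shift_closed[OF assms(1) assms(2), of "nat (-d)"] by simp
qed



lemma closed_iff:
  "closedin (full_shift_topology A) Z \<longleftrightarrow> Z \<subseteq> {x. \<forall>n. x n \<in> A} \<and>
     (\<forall>x. (\<forall>n. x n \<in> A) \<longrightarrow> (\<forall>k::nat. \<exists>z\<in>Z. \<forall>t. \<bar>t\<bar> \<le> int k \<longrightarrow> z t = x t) \<longrightarrow> x \<in> Z)"
  (is "?L \<longleftrightarrow> ?R")
proof
  assume L: ?L
  have sub: "Z \<subseteq> {x. \<forall>n. x n \<in> A}" using L unfolding closedin_def topspace_fs by blast
  have op: "openin (full_shift_topology A) ({x. \<forall>n. x n \<in> A} - Z)"
    using L unfolding closedin_def topspace_fs by blast
  show ?R
  proof (intro conjI sub allI impI)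
    fix x assume xA: "\<forall>n. x n \<in> A" and ap: "\<forall>k::nat. \<exists>z\<in>Z. \<forall>t. \<bar>t\<bar> \<le> int k \<longrightarrow> z t = x t"
    show "x \<in> Z"
    proof (rule ccontr)
      assume "x \<notin> Z"
      then have "x \<in> {x. \<forall>n. x n \<in> A} - Z" using xA by auto
      then have "\<exists>U. finite {i \<in> UNIV. U i \<noteq> topspace (discrete_topology A)} \<and>
         (\<forall>i\<in>UNIV. openin (discrete_topology A) (U i)) \<and> x \<in> Pi\<^sub>E UNIV U \<and>
         Pi\<^sub>E UNIV U \<subseteq> {x. \<forall>n. x n \<in> A} - Z"
        using op unfolding full_shift_topology_def openin_product_topology_alt by blast
      then obtain U where U0: "finite {i \<in> UNIV. U i \<noteq> topspace (discrete_topology A)}"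
         "\<forall>i\<in>UNIV. openin (discrete_topology A) (U i)" "x \<in> Pi\<^sub>E UNIV U"
         "Pi\<^sub>E UNIV U \<subseteq> {x. \<forall>n. x n \<in> A} - Z" by blast
      have U: "finite {i \<in> UNIV. U i \<noteq> A}" "\<forall>i. U i \<subseteq> A"
        "x \<in> Pi\<^sub>E UNIV U" "Pi\<^sub>E UNIV U \<subseteq> {x. \<forall>n. x n \<in> A} - Z"
        using U0 by simp_all
      define F where "F = {i \<in> UNIV. U i \<noteq> A}"
      define k where "k = nat (\<Sum>i\<in>F. \<bar>i\<bar>)"
      have kb: "\<bar>i\<bar> \<le> int k" if "i \<in> F" for i
      proof -
        have "\<bar>i\<bar> \<le> (\<Sum>i\<in>F. \<bar>i\<bar>)" using that U(1) F_def
          by (intro member_le_sum) auto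
        thus ?thesis by (simp add: k_def)
      qed
      obtain z where z: "z \<in> Z" "\<forall>t. \<bar>t\<bar> \<le> int k \<longrightarrow> z t = x t" using ap by blast
      have "z \<in> Pi\<^sub>E UNIV U"
      proof -
        have "z i \<in> U i" for i
        proof (cases "i \<in> F")
          case True then show ?thesis using z kb U(3) by (auto simp: PiE_def Pi_def)
        next
          case False then have "U i = A" by (simp add: F_def)
          then show ?thesis using z sub by auto
        qed
        thus ?thesis by (auto simp: PiE_def extensional_def)
      qed
      thus False using U(4) z by auto
    qed
  qed
next
  assume R: ?R
  have sub: "Z \<subseteq> {x. \<forall>n. x n \<in> A}" using R by blast
  have "openin (full_shift_topology A) ({x. \<forall>n. x n \<in> A} - Z)"
    unfolding full_shift_topology_def openin_product_topology_alt
  proof (intro ballI)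
    fix x assume x: "x \<in> {x. \<forall>n. x n \<in> A} - Z"
    then obtain k :: nat where k: "\<forall>z\<in>Z. \<exists>t. \<bar>t\<bar> \<le> int k \<and> z t \<noteq> x t" using R by blast
    define U where "U i = (if \<bar>i\<bar> \<le> int k then {x i} else A)" for i
    have "finite {i \<in> UNIV. U i \<noteq> topspace (discrete_topology A)}"
    proof (rule finite_subset)
      show "{i \<in> UNIV. U i \<noteq> topspace (discrete_topology A)} \<subseteq> {- int k..int k}"
        by (auto simp: U_def split: if_splits)
    qed auto
    moreover have "\<forall>i\<in>UNIV. openin (discrete_topology A) (U i)" using x by (auto simp: U_def)
    moreover have "x \<in> Pi\<^sub>E UNIV U" using x by (auto simp: U_def PiE_def extensional_def)
    moreover have "Pi\<^sub>E UNIV U \<subseteq> {x. \<forall>n. x n \<in> A} - Z"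
    proof
      fix y assume y: "y \<in> Pi\<^sub>E UNIV U"
      have yi: "y i \<in> U i" for i using y by (auto simp: PiE_def Pi_def)
      have "y i \<in> A" for i using yi[of i] x by (auto simp: U_def split: if_splits)
      moreover have "y \<notin> Z"
      proof
        assume "y \<in> Z"
        then obtain t where "\<bar>t\<bar> \<le> int k" "y t \<noteq> x t" using k by blast
        thus False using yi[of t] by (auto simp: U_def)
      qed
      ultimately show "y \<in> {x. \<forall>n. x n \<in> A} - Z" by auto
    qed
    ultimately show "\<exists>U. finite {i \<in> UNIV. U i \<noteq> topspace (discrete_topology A)} \<and>
             (\<forall>i\<in>UNIV. openin (discrete_topology A) (U i)) \<and> x \<in> Pi\<^sub>E UNIV U \<and> Pi\<^sub>E UNIV U \<subseteq> {x. \<forall>n. x n \<in> A} - Z"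
      by blast
  qed
  thus ?L using sub by (simp add: closedin_def topspace_fs)
qed




definition upath :: "('v \<times> 'v) set \<Rightarrow> 'v set \<Rightarrow> 'v list \<Rightarrow> bool" where
  "upath E V p \<longleftrightarrow> p \<noteq> [] \<and> distinct p \<and> set p \<subseteq> V \<and>
     (\<forall>j. Suc j < length p \<longrightarrow> uadj E (p ! j) (p ! Suc j))"

lemma uadj_sym: "uadj E u v \<Longrightarrow> uadj E v u" by (auto simp: uadj_def)

lemma no_leaf_cycle:
  assumes fin: "finite V" and ne: "V \<noteq> {}" and EV: "E \<subseteq> V \<times> V"
    and anti: "\<forall>u v. (u,v) \<in> E \<longrightarrow> (v,u) \<notin> E"
    and deg: "\<forall>x\<in>V. \<exists>y1 y2. y1 \<noteq> y2 \<and> uadj E x y1 \<and> uadj E x y2"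
  shows "\<not> ugraph_acyclic V E"
proof -
  obtain x0 where x0: "x0 \<in> V" using ne by auto
  have P0: "upath E V [x0]" using x0 by (simp add: upath_def)
  have bnd: "length p < Suc (card V)" if "upath E V p" for p
    using that fin by (metis card_mono distinct_card less_Suc_eq_le upath_def)
  obtain p where p: "upath E V p" and pmax: "\<forall>q. upath E V q \<longrightarrow> length q \<le> length p"
    using ex_has_greatest_nat[of "upath E V" "[x0]" length "Suc (card V)"] P0 bnd by blast
  define z where "z = p ! 0"
  have pne: "p \<noteq> []" and pd: "distinct p" and pV: "set p \<subseteq> V"
    and padj: "\<forall>j. Suc j < length p \<longrightarrow> uadj E (p ! j) (p ! Suc j)" using p by (auto simp: upath_def)
  have zV: "z \<in> V" using pne pV z_def by (simp add: subset_iff)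
  obtain y1 y2 where y: "y1 \<noteq> y2" "uadj E z y1" "uadj E z y2" using deg zV by blast
  have noloop: "\<not> uadj E u u" for u using anti by (auto simp: uadj_def)
  have inp: "y \<in> set p" if "uadj E z y" for y
  proof (rule ccontr)
    assume ny: "y \<notin> set p"
    have yV: "y \<in> V" using that EV by (auto simp: uadj_def)
    have "upath E V (y # p)"
      unfolding upath_def
    proof (intro conjI allI impI)
      show "distinct (y # p)" using ny pd by simp
      show "set (y # p) \<subseteq> V" using yV pV by simp
      fix j assume j: "Suc j < length (y # p)"
      show "uadj E ((y # p) ! j) ((y # p) ! Suc j)"
      proof (cases j)
        case 0 then show ?thesis using that uadj_sym pne by (simp add: z_def)
      next
        case (Suc j') then show ?thesis using padj j by simp
      qed
    qed simp
    thus False using pmax by fastforce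
  qed
  obtain y where yz: "uadj E z y" and y1: "length p \<ge> 2 \<longrightarrow> y \<noteq> p ! 1"
    using y by metis
  have yp: "y \<in> set p" using inp yz by blast
  then obtain i where i: "i < length p" "p ! i = y" by (metis in_set_conv_nth)
  have i0: "i \<noteq> 0"
  proof
    assume "i = 0" then have "y = z" using i z_def by simp
    thus False using yz noloop by simp
  qed
  have i1: "i \<noteq> 1" using i y1 by auto
  have i2: "i \<ge> 2" using i0 i1 by linarith
  define cs where "cs = take (Suc i) p"
  have lcs: "length cs = Suc i" using i by (simp add: cs_def)
  have "3 \<le> length cs \<and> distinct cs \<and> set cs \<subseteq> V \<and>
     (\<forall>j < length cs. uadj E (cs ! j) (cs ! ((j + 1) mod length cs)))"
  proof (intro conjI allI impI)
    show "3 \<le> length cs" using lcs i2 by simp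
    show "distinct cs" using pd by (simp add: cs_def)
    show "set cs \<subseteq> V" using pV set_take_subset cs_def by fastforce
    fix j assume j: "j < length cs"
    show "uadj E (cs ! j) (cs ! ((j + 1) mod length cs))"
    proof (cases "j = i")
      case True
      then have "(j + 1) mod length cs = 0" using lcs by simp
      then show ?thesis using True i yz uadj_sym by (simp add: cs_def z_def)
    next
      case False
      then have "j < i" using j lcs by simp
      then have "(j + 1) mod length cs = Suc j" using lcs by simp
      then show ?thesis using padj \<open>j < i\<close> i by (simp add: cs_def)
    qed
  qed
  thus ?thesis unfolding ugraph_acyclic_def by blast
qed

lemma acyclic_card:
  assumes "finite V" "V \<noteq> {}" "E \<subseteq> V \<times> V" "\<forall>u v. (u,v) \<in> E \<longrightarrow> (v,u) \<notin> E"
    "ugraph_acyclic V E"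
  shows "card E \<le> card V - 1"
  using assms
proof (induction "card V" arbitrary: V E rule: less_induct)
  case less
  note fin = less.prems(1) and ne = less.prems(2) and EV = less.prems(3) and anti = less.prems(4)
    and ac = less.prems(5)
  have "\<not> (\<forall>x\<in>V. \<exists>y1 y2. y1 \<noteq> y2 \<and> uadj E x y1 \<and> uadj E x y2)"
    using no_leaf_cycle[OF fin ne EV anti] ac by blast
  then obtain x where xV: "x \<in> V" and leaf: "\<forall>y1 y2. uadj E x y1 \<and> uadj E x y2 \<longrightarrow> y1 = y2"
    by blast
  have finE: "finite E" using EV fin finite_subset by blast
  show ?case
  proof (cases "V = {x}")
    case True
    then have "E = {}" using EV anti by auto
    then show ?thesis by simp
  next
    case False
    define V' where "V' = V - {x}"
    define E' where "E' = {e\<in>E. fst e \<noteq> x \<and> snd e \<noteq> x}"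
    have V'ne: "V' \<noteq> {}" using False xV V'_def by auto
    have cV': "card V' = card V - 1" using xV fin by (simp add: V'_def)
    have cV2: "card V \<ge> 2"
    proof -
      obtain x' where "x' \<in> V" "x' \<noteq> x" using False xV by blast
      then have "{x, x'} \<subseteq> V" using xV by auto
      then show ?thesis using fin card_mono by (metis \<open>x' \<noteq> x\<close> card_2_iff)
    qed
    have EV': "E' \<subseteq> V' \<times> V'" using EV by (auto simp: E'_def V'_def)
    have ac': "ugraph_acyclic V' E'"
      using ac unfolding ugraph_acyclic_def
    proof (elim contrapos_nn exE conjE)
      fix cs assume "3 \<le> length cs" "distinct cs" "set cs \<subseteq> V'"
        "\<forall>i<length cs. uadj E' (cs ! i) (cs ! ((i + 1) mod length cs))"
      then show "\<exists>cs. 3 \<le> length cs \<and> distinct cs \<and> set cs \<subseteq> V \<and>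
           (\<forall>i<length cs. uadj E (cs ! i) (cs ! ((i + 1) mod length cs)))"
        by (intro exI[of _ cs]) (auto simp: V'_def E'_def uadj_def)
    qed
    have IH: "card E' \<le> card V' - 1"
      using less.hyps[of V' E'] cV' cV2 fin V'ne EV' anti ac' by (auto simp: V'_def E'_def)
    have sm: "card (E - E') \<le> 1"
    proof (cases "E - E' = {}")
      case True then show ?thesis by (simp only: True card.empty)
    next
      case False
      then obtain e0 where e0: "e0 \<in> E - E'" by blast
      have "E - E' \<subseteq> {e0}"
      proof
        fix e assume e: "e \<in> E - E'"
        have key: "\<exists>y. uadj E x y \<and> (f = (x,y) \<or> f = (y,x))" if "f \<in> E - E'" for f
          using that by (cases f) (auto simp: E'_def uadj_def)
        obtain y where y: "uadj E x y" "e = (x,y) \<or> e = (y,x)" using key e by blast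
        obtain y0 where y0: "uadj E x y0" "e0 = (x,y0) \<or> e0 = (y0,x)" using key e0 by blast
        have "y = y0" using leaf y y0 by blast
        then show "e \<in> {e0}" using y y0 e e0 anti by auto
      qed
      then show ?thesis using card_mono[of "{e0}" "E - E'"] by simp
    qed
    have "E = E' \<union> (E - E')" by (auto simp: E'_def)
    then have "card E \<le> card E' + card (E - E')" by (metis card_Un_le)
    then show ?thesis using IH sm cV' cV2 by linarith
  qed
qed




lemma eventually_const_nat:
  fixes f :: "nat \<Rightarrow> nat"
  assumes "\<forall>n\<ge>m. f (Suc n) \<le> f n"
  shows "\<exists>N\<ge>m. \<forall>n\<ge>N. f (Suc n) = f n"
  using assms
proof (induction "f m" arbitrary: m rule: less_induct)
  case less
  have mono: "f (m + k) \<le> f m" for k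
  proof (induction k)
    case 0 then show ?case by simp
  next
    case (Suc k)
    have "f (Suc (m + k)) \<le> f (m + k)" using less.prems by simp
    then show ?case using Suc by simp
  qed
  show ?case
  proof (cases "\<forall>n\<ge>m. f (Suc n) = f n")
    case True then show ?thesis by blast
  next
    case False
    then obtain n where n: "n \<ge> m" "f (Suc n) \<noteq> f n" by blast
    then have "f (Suc n) < f n" using less.prems by (meson le_neq_implies_less)
    moreover have "f n \<le> f m" using mono[of "n - m"] n by simp
    ultimately have lt: "f (Suc n) < f m" by simp
    have "\<forall>n'\<ge>Suc n. f (Suc n') \<le> f n'" using less.prems n by simp
    then obtain N where "N \<ge> Suc n" "\<forall>n\<ge>N. f (Suc n) = f n" using less.hyps[OF lt] by blast
    then show ?thesis using n by (intro exI[of _ N]) auto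
  qed
qed

lemma potential_stable:
  fixes S :: "nat \<Rightarrow> 'w set" and T U :: "'w \<Rightarrow> 'b set" and g :: "'w \<Rightarrow> 'b \<Rightarrow> 'w"
    and \<rho> :: "'w \<Rightarrow> nat"
  assumes finS: "\<And>n. finite (S n)" and finU: "\<And>w. finite (U w)"
    and split: "\<And>n. S (Suc n) = (\<lambda>(w,a). g w a) ` (SIGMA w:S n. T w)"
    and inj: "\<And>w w' a a'. g w a = g w' a' \<Longrightarrow> w = w' \<and> a = a'"
    and sub: "\<And>w. T w \<subseteq> U w"
    and loc: "\<And>n w. n \<ge> m \<Longrightarrow> w \<in> S n \<Longrightarrow> (\<Sum>a\<in>U w. \<rho> (g w a)) \<le> \<rho> w"
  shows "\<exists>N. \<forall>n\<ge>N. \<forall>w\<in>S n. \<forall>a\<in>U w - T w. \<rho> (g w a) = 0"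
proof -
  define \<Phi> where "\<Phi> n = (\<Sum>w\<in>S n. \<rho> w)" for n
  have finT: "finite (T w)" for w using finU sub finite_subset by blast
  have injon: "inj_on (\<lambda>(w,a). g w a) (SIGMA w:S n. T w)" for n
    by (auto simp: inj_on_def dest: inj)
  have Phis: "\<Phi> (Suc n) = (\<Sum>w\<in>S n. \<Sum>a\<in>T w. \<rho> (g w a))" for n
  proof -
    have "\<Phi> (Suc n) = (\<Sum>x\<in>(SIGMA w:S n. T w). \<rho> ((\<lambda>(w,a). g w a) x))"
      unfolding \<Phi>_def split[of n] using sum.reindex[OF injon[of n], of \<rho>] by (simp add: comp_def)
    also have "\<dots> = (\<Sum>w\<in>S n. \<Sum>a\<in>T w. \<rho> (g w a))"
      using sum.Sigma[of "S n" T "\<lambda>w a. \<rho> (g w a)"] finS finT by (simp add: case_prod_beta')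
    finally show ?thesis .
  qed
  have decomp: "(\<Sum>a\<in>U w. \<rho> (g w a)) = (\<Sum>a\<in>U w - T w. \<rho> (g w a)) + (\<Sum>a\<in>T w. \<rho> (g w a))" for w
    using sum.subset_diff[OF sub finU] by simp
  have le1: "(\<Sum>a\<in>T w. \<rho> (g w a)) \<le> \<rho> w" if "n \<ge> m" "w \<in> S n" for n w
    using loc[OF that] decomp[of w] by simp
  have dec: "\<forall>n\<ge>m. \<Phi> (Suc n) \<le> \<Phi> n"
  proof (intro allI impI)
    fix n assume "m \<le> n"
    have "\<Phi> (Suc n) = (\<Sum>w\<in>S n. \<Sum>a\<in>T w. \<rho> (g w a))" by (rule Phis)
    also have "\<dots> \<le> (\<Sum>w\<in>S n. \<rho> w)" by (rule sum_mono) (use le1 \<open>m \<le> n\<close> in auto)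
    finally show "\<Phi> (Suc n) \<le> \<Phi> n" by (simp add: \<Phi>_def)
  qed
  have strict: "\<Phi> (Suc n) < \<Phi> n" if "n \<ge> m" "w0 \<in> S n" "a0 \<in> U w0 - T w0" "\<rho> (g w0 a0) > 0"
    for n w0 a0
  proof -
    have "\<rho> (g w0 a0) \<le> (\<Sum>a\<in>U w0 - T w0. \<rho> (g w0 a))"
      using that(3) finU by (intro member_le_sum) auto
    then have "(\<Sum>a\<in>T w0. \<rho> (g w0 a)) < \<rho> w0"
      using loc[OF that(1,2)] decomp[of w0] that(4) by simp
    then have "(\<Sum>w\<in>S n. \<Sum>a\<in>T w. \<rho> (g w a)) < (\<Sum>w\<in>S n. \<rho> w)"
      using le1[OF that(1)] that(2) finS by (intro sum_strict_mono_ex1) auto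
    then show ?thesis by (simp only: Phis) (simp add: \<Phi>_def)
  qed
  obtain N where N: "N \<ge> m" "\<forall>n\<ge>N. \<Phi> (Suc n) = \<Phi> n" using eventually_const_nat[OF dec] by blast
  show ?thesis
  proof (intro exI[of _ N] allI impI ballI)
    fix n w a assume "N \<le> n" "w \<in> S n" "a \<in> U w - T w"
    then show "\<rho> (g w a) = 0" using strict[of n w a] N by fastforce
  qed
qed

section \<open>Extension graphs\<close>

context
  fixes A :: "'a set" and X :: "(int \<Rightarrow> 'a) set"
  assumes finA: "finite A" and XA: "X \<subseteq> {x. \<forall>n. x n \<in> A}"
begin

lemma finite_left_ext: "finite (left_ext X w)"
proof (rule finite_subset[OF _ finA])
  show "left_ext X w \<subseteq> A" using lang_letters[OF XA] by (fastforce simp: left_ext_def)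
qed

lemma finite_right_ext: "finite (right_ext X w)"
proof (rule finite_subset[OF _ finA])
  show "right_ext X w \<subseteq> A" using lang_letters[OF XA] by (fastforce simp: right_ext_def)
qed

lemma edges_eq1: "ext_edges X w = (\<lambda>(a,b). (Inl a, Inr b)) ` (SIGMA a:left_ext X w. right_ext X (a#w))"
proof (intro equalityI subsetI)
  fix e assume "e \<in> ext_edges X w"
  then obtain a b where e: "e = (Inl a, Inr b)" "a # w @ [b] \<in> language X" by (auto simp: ext_edges_def)
  then have "a # w \<in> language X" using lang_prefix[of "a # w" "[b]"] by simp
  then show "e \<in> (\<lambda>(a,b). (Inl a, Inr b)) ` (SIGMA a:left_ext X w. right_ext X (a#w))"
    using e by (auto simp: left_ext_def right_ext_def)
qed (auto simp: ext_edges_def left_ext_def right_ext_def)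

lemma edges_eq2: "ext_edges X w = (\<lambda>(b,a). (Inl a, Inr b)) ` (SIGMA b:right_ext X w. left_ext X (w@[b]))"
proof (intro equalityI subsetI)
  fix e assume "e \<in> ext_edges X w"
  then obtain a b where e: "e = (Inl a, Inr b)" "a # w @ [b] \<in> language X" by (auto simp: ext_edges_def)
  then have "w @ [b] \<in> language X" using lang_suffix[of "[a]" "w @ [b]"] by simp
  then show "e \<in> (\<lambda>(b,a). (Inl a, Inr b)) ` (SIGMA b:right_ext X w. left_ext X (w@[b]))"
    using e by (auto simp: left_ext_def right_ext_def)
qed (auto simp: ext_edges_def left_ext_def right_ext_def)

lemma card_edges1: "card (ext_edges X w) = (\<Sum>a\<in>left_ext X w. card (right_ext X (a#w)))"
proof -
  have "inj_on (\<lambda>(a,b). (Inl a, Inr b)) (SIGMA a:left_ext X w. right_ext X (a#w))"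
    by (auto simp: inj_on_def)
  then have "card (ext_edges X w) = card (SIGMA a:left_ext X w. right_ext X (a#w))"
    unfolding edges_eq1 by (rule card_image)
  also have "\<dots> = (\<Sum>a\<in>left_ext X w. card (right_ext X (a#w)))"
    by (rule card_SigmaI) (auto simp: finite_left_ext finite_right_ext)
  finally show ?thesis .
qed

lemma card_edges2: "card (ext_edges X w) = (\<Sum>b\<in>right_ext X w. card (left_ext X (w@[b])))"
proof -
  have "inj_on (\<lambda>(b,a). (Inl a, Inr b)) (SIGMA b:right_ext X w. left_ext X (w@[b]))"
    by (auto simp: inj_on_def)
  then have "card (ext_edges X w) = card (SIGMA b:right_ext X w. left_ext X (w@[b]))"
    unfolding edges_eq2 by (rule card_image)
  also have "\<dots> = (\<Sum>b\<in>right_ext X w. card (left_ext X (w@[b])))"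
    by (rule card_SigmaI) (auto simp: finite_left_ext finite_right_ext)
  finally show ?thesis .
qed

lemma card_vertices: "card (ext_vertices X w) = card (left_ext X w) + card (right_ext X w)"
  unfolding ext_vertices_def
  by (subst card_Un_disjoint) (auto simp: finite_left_ext finite_right_ext card_image)

lemma tree_card:
  assumes "w \<in> language X" "ugraph_tree (ext_vertices X w) (ext_edges X w)"
  shows "card (ext_edges X w) \<le> card (left_ext X w) + card (right_ext X w) - 1"
proof -
  have "card (ext_edges X w) \<le> card (ext_vertices X w) - 1"
  proof (rule acyclic_card)
    show "finite (ext_vertices X w)" by (simp add: ext_vertices_def finite_left_ext finite_right_ext)
    show "ext_vertices X w \<noteq> {}" using assms(2) by (simp add: ugraph_tree_def ugraph_connected_def)
    show "ext_edges X w \<subseteq> ext_vertices X w \<times> ext_vertices X w"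
    proof
      fix e assume "e \<in> ext_edges X w"
      then obtain a b where e: "e = (Inl a, Inr b)" "a # w @ [b] \<in> language X" by (auto simp: ext_edges_def)
      have "a # w \<in> language X" using lang_prefix[of "a # w" "[b]"] e by simp
      moreover have "w @ [b] \<in> language X" using lang_suffix[of "[a]" "w @ [b]"] e by simp
      ultimately show "e \<in> ext_vertices X w \<times> ext_vertices X w"
        using e by (auto simp: ext_vertices_def left_ext_def right_ext_def)
    qed
    show "\<forall>u v. (u, v) \<in> ext_edges X w \<longrightarrow> (v, u) \<notin> ext_edges X w"
      by (auto simp: ext_edges_def)
    show "ugraph_acyclic (ext_vertices X w) (ext_edges X w)" using assms(2) by (simp add: ugraph_tree_def)
  qed
  then show ?thesis by (simp add: card_vertices)
qed

lemma left_ne: "w \<in> language X \<Longrightarrow> card (left_ext X w) \<ge> 1"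
  using lang_left_ext[of w X] finite_left_ext[of w]
  by (metis Suc_leI card_gt_0_iff empty_iff left_ext_def mem_Collect_eq One_nat_def)

lemma right_ne: "w \<in> language X \<Longrightarrow> card (right_ext X w) \<ge> 1"
  using lang_right_ext[of w X] finite_right_ext[of w]
  by (metis Suc_leI card_gt_0_iff empty_iff right_ext_def mem_Collect_eq One_nat_def)

lemma local_ineq1:
  assumes "w \<in> language X" "ugraph_tree (ext_vertices X w) (ext_edges X w)"
  shows "(\<Sum>a\<in>left_ext X w. card (right_ext X (a#w)) - 1) \<le> card (right_ext X w) - 1"
proof -
  have ge: "1 \<le> card (right_ext X (a#w))" if "a \<in> left_ext X w" for a
    using that right_ne by (simp add: left_ext_def)
  have "(\<Sum>a\<in>left_ext X w. card (right_ext X (a#w)) - 1) =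
        (\<Sum>a\<in>left_ext X w. card (right_ext X (a#w))) - (\<Sum>a\<in>left_ext X w. 1)"
    using ge by (rule sum_subtractf_nat)
  also have "\<dots> = card (ext_edges X w) - card (left_ext X w)" by (simp add: card_edges1)
  finally show ?thesis using tree_card[OF assms] left_ne[OF assms(1)] by linarith
qed

lemma local_ineq2:
  assumes "w \<in> language X" "ugraph_tree (ext_vertices X w) (ext_edges X w)"
  shows "(\<Sum>b\<in>right_ext X w. card (left_ext X (w@[b])) - 1) \<le> card (left_ext X w) - 1"
proof -
  have ge: "1 \<le> card (left_ext X (w@[b]))" if "b \<in> right_ext X w" for b
    using that left_ne by (simp add: right_ext_def)
  have "(\<Sum>b\<in>right_ext X w. card (left_ext X (w@[b])) - 1) =
        (\<Sum>b\<in>right_ext X w. card (left_ext X (w@[b]))) - (\<Sum>b\<in>right_ext X w. 1)"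
    using ge by (rule sum_subtractf_nat)
  also have "\<dots> = card (ext_edges X w) - card (right_ext X w)" by (simp add: card_edges2)
  finally show ?thesis using tree_card[OF assms] right_ne[OF assms(1)] by linarith
qed

end




lemma not_in_lang:
  assumes "shift_space A Y" "x \<notin> Y" "\<forall>n. x n \<in> A" "Z \<subseteq> {x. \<forall>n. x n \<in> A}"
  shows "\<exists>k::nat. win x (- int k) (2 * k + 1) \<notin> language Y"
proof -
  have cl: "closedin (full_shift_topology A) Y" and inv: "shift ` Y = Y"
    using assms(1) by (auto simp: shift_space_def)
  have "\<not> (\<forall>k::nat. \<exists>z\<in>Y. \<forall>t. \<bar>t\<bar> \<le> int k \<longrightarrow> z t = x t)"
    using cl assms(2,3) unfolding closed_iff by blast
  then obtain k :: nat where k: "\<forall>z\<in>Y. \<exists>t. \<bar>t\<bar> \<le> int k \<and> z t \<noteq> x t" by blast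
  show ?thesis
  proof (intro exI[of _ k] notI)
    assume "win x (- int k) (2 * k + 1) \<in> language Y"
    then obtain y i where y: "y \<in> Y" "win x (- int k) (2 * k + 1) = win y i (2 * k + 1)"
      by (auto simp: lang_iff)
    define z where "z = (\<lambda>t. y (t + (i + int k)))"
    have zY: "z \<in> Y" unfolding z_def using shift_closed_int[OF inv y(1)] by simp
    have "z t = x t" if "\<bar>t\<bar> \<le> int k" for t
    proof -
      have lt: "nat (t + int k) < 2 * k + 1" using that by linarith
      have "win x (- int k) (2 * k + 1) ! nat (t + int k) = win y i (2 * k + 1) ! nat (t + int k)"
        using y(2) by simp
      then have "x (- int k + int (nat (t + int k))) = y (i + int (nat (t + int k)))"
        using lt by simp
      moreover have "int (nat (t + int k)) = t + int k" using that by simp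
      ultimately show ?thesis by (simp add: z_def algebra_simps)
    qed
    then show False using k zY by blast
  qed
qed

lemma irred_imp_minimal:
  fixes A :: "'a set" and X Y :: "(int \<Rightarrow> 'a) set"
  assumes finA: "finite A" and shX: "shift_space A X" and ed: "eventually_dendric X"
    and irr: "irreducible_shift X" and shY: "shift_space A Y" and Yne: "Y \<noteq> {}" and YX: "Y \<subseteq> X"
  shows "Y = X"
proof (rule ccontr)
  assume "Y \<noteq> X"
  then obtain x where x: "x \<in> X" "x \<notin> Y" using YX by blast
  have XA: "X \<subseteq> {x. \<forall>n. x n \<in> A}" and YA: "Y \<subseteq> {x. \<forall>n. x n \<in> A}"
    using shX shY by (auto simp: shift_space_def)
  have LYX: "language Y \<subseteq> language X" using YX by (rule lang_mono)
  obtain k where "win x (- int k) (2 * k + 1) \<notin> language Y"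
    using not_in_lang[OF shY x(2)] x(1) XA by blast
  moreover have "win x (- int k) (2 * k + 1) \<in> language X" using x(1) by (auto simp: lang_iff)
  ultimately obtain u where u: "u \<in> language X" "u \<notin> language Y" by blast
  obtain m where tree: "\<forall>w\<in>language X. m \<le> length w \<longrightarrow> ugraph_tree (ext_vertices X w) (ext_edges X w)"
    using ed by (auto simp: eventually_dendric_def)
  define S where "S n = {w \<in> language Y. length w = n}" for n
  have finS: "finite (S n)" for n unfolding S_def by (rule finite_lang_len[OF finA YA])
  have "\<exists>N. \<forall>n\<ge>N. \<forall>w\<in>S n. \<forall>a\<in>left_ext X w - left_ext Y w. card (right_ext X (a#w)) - 1 = 0"
  proof (rule potential_stable[where m = m and g = "\<lambda>w a. a # w" and \<rho> = "\<lambda>w. card (right_ext X w) - 1"])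
    show "finite (S n)" for n by (rule finS)
    show "finite (left_ext X w)" for w by (rule finite_left_ext[OF finA XA])
    show "S (Suc n) = (\<lambda>(w,a). a # w) ` (SIGMA w:S n. left_ext Y w)" for n
    proof (intro equalityI subsetI)
      fix w' assume "w' \<in> S (Suc n)"
      then obtain a w where "w' = a # w" "a # w \<in> language Y" "length w = n"
        by (cases w') (auto simp: S_def)
      moreover then have "w \<in> language Y" using lang_suffix[of "[a]" w] by simp
      ultimately show "w' \<in> (\<lambda>(w,a). a # w) ` (SIGMA w:S n. left_ext Y w)"
        by (auto simp: S_def left_ext_def)
    qed (auto simp: S_def left_ext_def)
    show "a # w = a' # w' \<Longrightarrow> w = w' \<and> a = a'" for w w' a a' by simp
    show "left_ext Y w \<subseteq> left_ext X w" for w using LYX by (auto simp: left_ext_def)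
    show "(\<Sum>a\<in>left_ext X w. card (right_ext X (a#w)) - 1) \<le> card (right_ext X w) - 1"
      if "m \<le> n" "w \<in> S n" for n w
    proof -
      have "w \<in> language X" using that LYX by (auto simp: S_def)
      then show ?thesis using local_ineq1[OF finA XA] tree that by (auto simp: S_def)
    qed
  qed
  then obtain N1 where N1: "\<forall>n\<ge>N1. \<forall>w\<in>S n. \<forall>a\<in>left_ext X w - left_ext Y w. card (right_ext X (a#w)) - 1 = 0"
    by blast
  have "\<exists>N. \<forall>n\<ge>N. \<forall>w\<in>S n. \<forall>b\<in>right_ext X w - right_ext Y w. card (left_ext X (w@[b])) - 1 = 0"
  proof (rule potential_stable[where m = m and g = "\<lambda>w b. w @ [b]" and \<rho> = "\<lambda>w. card (left_ext X w) - 1"])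
    show "finite (S n)" for n by (rule finS)
    show "finite (right_ext X w)" for w by (rule finite_right_ext[OF finA XA])
    show "S (Suc n) = (\<lambda>(w,b). w @ [b]) ` (SIGMA w:S n. right_ext Y w)" for n
    proof (intro equalityI subsetI)
      fix w' assume w': "w' \<in> S (Suc n)"
      then have "w' \<noteq> []" by (auto simp: S_def)
      then obtain w b where "w' = w @ [b]" by (metis append_butlast_last_id)
      moreover have "w @ [b] \<in> language Y" "length w = n" using w' calculation by (auto simp: S_def)
      moreover then have "w \<in> language Y" using lang_prefix[of w "[b]"] by simp
      ultimately show "w' \<in> (\<lambda>(w,b). w @ [b]) ` (SIGMA w:S n. right_ext Y w)"
        by (auto simp: S_def right_ext_def)
    qed (auto simp: S_def right_ext_def)
    show "w @ [a] = w' @ [a'] \<Longrightarrow> w = w' \<and> a = a'" for w w' a a' by simp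
    show "right_ext Y w \<subseteq> right_ext X w" for w using LYX by (auto simp: right_ext_def)
    show "(\<Sum>b\<in>right_ext X w. card (left_ext X (w@[b])) - 1) \<le> card (left_ext X w) - 1"
      if "m \<le> n" "w \<in> S n" for n w
    proof -
      have "w \<in> language X" using that LYX by (auto simp: S_def)
      then show ?thesis using local_ineq2[OF finA XA] tree that by (auto simp: S_def)
    qed
  qed
  then obtain N2 where N2: "\<forall>n\<ge>N2. \<forall>w\<in>S n. \<forall>b\<in>right_ext X w - right_ext Y w. card (left_ext X (w@[b])) - 1 = 0"
    by blast
  define N where "N = max m (max N1 N2)"
  obtain y1 where y1: "y1 \<in> language Y" "length y1 = N" using lang_exists_len[OF Yne] by blast
  have y1X: "y1 \<in> language X" using y1(1) LYX by blast
  obtain t where t: "y1 @ t @ u \<in> language X"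
    using irr y1X u(1) unfolding irreducible_shift_def by blast
  define W where "W = y1 @ t @ u"
  have WY: "W \<notin> language Y" using u(2) lang_suffix[of "y1 @ t" u Y] by (auto simp: W_def)
  define P where "P k = (k \<le> length W \<and> take k W \<in> language Y)" for k
  have PN: "P N" using y1 by (simp add: P_def W_def)
  obtain k0 where k0: "P k0" "\<forall>k. P k \<longrightarrow> k \<le> k0"
    using ex_has_greatest_nat[of P N id "Suc (length W)"] PN by (auto simp: P_def)
  have Nk0: "N \<le> k0" using k0 PN by blast
  have k0lt: "k0 < length W" using k0(1) WY by (auto simp: P_def order.order_iff_strict)
  define p where "p = take k0 W"
  define c where "c = W ! k0"
  have pc: "take (Suc k0) W = p @ [c]" using k0lt by (simp add: p_def c_def take_Suc_conv_app_nth)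
  have pY: "p \<in> language Y" using k0(1) by (simp add: P_def p_def)
  have pcY: "p @ [c] \<notin> language Y" using k0(2)[rule_format, of "Suc k0"] k0lt pc by (auto simp: P_def)
  have WX: "W \<in> language X" using t by (simp add: W_def)
  have "take (Suc k0) W @ drop (Suc k0) W \<in> language X" using WX by (simp only: append_take_drop_id)
  then have pcX: "p @ [c] \<in> language X" using lang_prefix pc by metis
  have lp: "length p \<ge> N" using Nk0 k0lt by (simp add: p_def)
  have claim: "z @ p @ [c] \<in> language X \<Longrightarrow> z @ p \<in> language Y" for z
  proof (induction z)
    case Nil then show ?case using pY by simp
  next
    case (Cons a z')
    have z'X: "z' @ p @ [c] \<in> language X" using Cons.prems lang_suffix[of "[a]" "z' @ p @ [c]"] by simp
    define w where "w = z' @ p"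
    have wY: "w \<in> language Y" using Cons.IH z'X by (simp add: w_def)
    have lw: "length w \<ge> N" using lp by (simp add: w_def)
    have wX: "w \<in> language X" using wY LYX by blast
    have wcX: "w @ [c] \<in> language X" using z'X by (simp add: w_def)
    have wcY: "w @ [c] \<notin> language Y"
      using pcY lang_suffix[of z' "p @ [c]" Y] by (auto simp: w_def)
    have awcX: "a # w @ [c] \<in> language X" using Cons.prems by (simp add: w_def)
    have awX: "a # w \<in> language X" using awcX lang_prefix[of "a # w" "[c]"] by simp
    show ?case
    proof (rule ccontr)
      assume awY: "(a # z') @ p \<notin> language Y"
      then have awY': "a # w \<notin> language Y" by (simp add: w_def)
      have SN: "w \<in> S (length w)" using wY by (simp add: S_def)
      have "card (right_ext X (a#w)) - 1 = 0"
        using N1 SN lw awX awY' by (auto simp: N_def left_ext_def)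
      then have uniqR: "b = c" if "a # w @ [b] \<in> language X" for b
        using card_le_Suc0_iff_eq[OF finite_right_ext[OF finA XA, of "a#w"]] that awcX
        by (auto simp: right_ext_def)
      have "card (left_ext X (w@[c])) - 1 = 0"
        using N2 SN lw wcX wcY by (auto simp: N_def right_ext_def)
      then have uniqL: "a' = a" if "a' # w @ [c] \<in> language X" for a'
        using card_le_Suc0_iff_eq[OF finite_left_ext[OF finA XA, of "w@[c]"]] that awcX
        by (auto simp: left_ext_def)
      obtain a1 where a1: "a1 # w \<in> language Y" using lang_left_ext[OF wY] by blast
      have a1X: "a1 # w \<in> language X" using a1 LYX by blast
      have a1a: "a1 \<noteq> a" using a1 awY' by blast
      have tr: "ugraph_tree (ext_vertices X w) (ext_edges X w)"
        using tree wX lw by (auto simp: N_def)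
      define V where "V = ext_vertices X w"
      define E where "E = ext_edges X w"
      define R where "R = {(p, q). p \<in> V \<and> q \<in> V \<and> uadj E p q}"
      have conn: "(Inl a, Inl a1) \<in> R\<^sup>*"
        using tr awX a1X unfolding ugraph_tree_def ugraph_connected_def R_def V_def E_def
        by (auto simp: ext_vertices_def left_ext_def)
      have reach: "q \<in> {Inl a, Inr c}" if "(Inl a, q) \<in> R\<^sup>*" for q
        using that
      proof (induction rule: rtrancl_induct)
        case base then show ?case by simp
      next
        case (step q r)
        then have adj: "uadj E q r" by (simp add: R_def)
        show ?case
        proof (cases "q = Inl a")
          case True
          then have "(Inl a, r) \<in> E" using adj by (auto simp: uadj_def E_def ext_edges_def)
          then obtain b where "r = Inr b" "a # w @ [b] \<in> language X" by (auto simp: E_def ext_edges_def)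
          then show ?thesis using uniqR by auto
        next
          case False
          then have qc: "q = Inr c" using step.IH by simp
          then have "(r, Inr c) \<in> E" using adj by (auto simp: uadj_def E_def ext_edges_def)
          then obtain a' where "r = Inl a'" "a' # w @ [c] \<in> language X" by (auto simp: E_def ext_edges_def)
          then show ?thesis using uniqL by auto
        qed
      qed
      show False using reach[OF conn] a1a by simp
    qed
  qed
  obtain t' where t': "(p @ [c]) @ t' @ (p @ [c]) \<in> language X"
    using irr pcX unfolding irreducible_shift_def by blast
  have "(p @ [c] @ t') @ p \<in> language Y" using claim[of "p @ [c] @ t'"] t' by simp
  then have "p @ [c] \<in> language Y" using lang_prefix[of "p @ [c]" "t' @ p" Y] by simp
  then show False using pcY by simp
qed




lemma win_shift: "win (\<lambda>t. x (t + d)) j n = win x (j + d) n"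
  by (simp add: win_def algebra_simps)

lemma compact_fs: "finite A \<Longrightarrow> compact_space (full_shift_topology A)"
  unfolding full_shift_topology_def
  by (simp add: compact_space_product_topology compact_space_discrete_topology)

lemma minimal_imp_UR:
  fixes A :: "'a set" and X :: "(int \<Rightarrow> 'a) set"
  assumes finA: "finite A" and mi: "minimal_shift A X" and v: "v \<in> language X"
  shows "\<exists>N::nat. \<forall>x\<in>X. \<exists>j. \<bar>j\<bar> \<le> int N \<and> win x j (length v) = v"
proof (rule ccontr)
  assume nUR: "\<not> ?thesis"
  have shX: "shift_space A X" and Xne: "X \<noteq> {}"
    and min: "\<And>Y. shift_space A Y \<Longrightarrow> Y \<noteq> {} \<Longrightarrow> Y \<subseteq> X \<Longrightarrow> Y = X"
    using mi by (auto simp: minimal_shift_def)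
  have XA: "X \<subseteq> {x. \<forall>n. x n \<in> A}" and clX: "closedin (full_shift_topology A) X"
    and inv: "shift ` X = X" using shX by (auto simp: shift_space_def)
  define K where "K N = {x\<in>X. \<forall>j. \<bar>j\<bar> \<le> int N \<longrightarrow> win x j (length v) \<noteq> v}" for N :: nat
  have Kne: "K N \<noteq> {}" for N using nUR by (auto simp: K_def)
  have Kmono: "K N' \<subseteq> K N" if "N \<le> N'" for N N' using that by (auto simp: K_def)
  have Kcl: "closedin (full_shift_topology A) (K N)" for N
    unfolding closed_iff
  proof (intro conjI allI impI)
    show "K N \<subseteq> {x. \<forall>n. x n \<in> A}" using XA by (auto simp: K_def)
    fix x assume xA: "\<forall>n. x n \<in> A" and ap: "\<forall>k::nat. \<exists>z\<in>K N. \<forall>t. \<bar>t\<bar> \<le> int k \<longrightarrow> z t = x t"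
    have ap': "\<forall>k::nat. \<exists>z\<in>X. \<forall>t. \<bar>t\<bar> \<le> int k \<longrightarrow> z t = x t"
      using ap unfolding K_def by blast
    have "x \<in> X" using clX xA ap' unfolding closed_iff by blast
    moreover have "win x j (length v) \<noteq> v" if "\<bar>j\<bar> \<le> int N" for j
    proof -
      obtain z where z: "z \<in> K N" "\<forall>t. \<bar>t\<bar> \<le> int (N + length v) \<longrightarrow> z t = x t"
        using ap by blast
      have "win z j (length v) = win x j (length v)"
        unfolding win_def using z(2) that by (intro map_cong) auto
      then show ?thesis using z(1) that by (auto simp: K_def)
    qed
    ultimately show "x \<in> K N" by (auto simp: K_def)
  qed
  have "\<Inter>(range K) \<noteq> {}"
    using compact_fs[OF finA] unfolding compact_space_fip
  proof (elim allE impE)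
    show "(\<forall>C\<in>range K. closedin (full_shift_topology A) C) \<and>
        (\<forall>\<F>. finite \<F> \<and> \<F> \<subseteq> range K \<longrightarrow> \<Inter> \<F> \<noteq> {})"
    proof (intro conjI ballI allI impI)
      fix C assume "C \<in> range K" then show "closedin (full_shift_topology A) C" using Kcl by auto
    next
      fix F assume F: "finite F \<and> F \<subseteq> range K"
      then obtain I where I: "finite I" "F = K ` I" by (meson finite_subset_image)
      show "\<Inter> F \<noteq> {}"
      proof (cases "I = {}")
        case True then show ?thesis using I by simp
      next
        case False
        have "K (Max I) \<subseteq> K n" if "n \<in> I" for n using Kmono Max_ge[OF I(1) that] by blast
        then have "K (Max I) \<subseteq> \<Inter> F" using I by blast
        then show ?thesis using Kne by blast
      qed
    qed
  qed
  then obtain z where z: "z \<in> \<Inter>(range K)" by blast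
  define Z where "Z = \<Inter>(range K)"
  have Zeq: "Z = {x\<in>X. \<forall>j. win x j (length v) \<noteq> v}"
  proof (intro equalityI subsetI)
    fix x assume "x \<in> Z"
    then have "x \<in> K 0" "\<forall>j. x \<in> K (nat \<bar>j\<bar>)" by (auto simp: Z_def)
    then show "x \<in> {x\<in>X. \<forall>j. win x j (length v) \<noteq> v}" by (auto simp: K_def)
  qed (auto simp: Z_def K_def)
  have shZ: "shift_space A Z"
    unfolding shift_space_def
  proof (intro conjI)
    show "Z \<subseteq> {x. \<forall>n. x n \<in> A}" using XA Zeq by auto
    show "closedin (full_shift_topology A) Z" unfolding Z_def
      by (rule closedin_Inter) (use Kcl in auto)
    show "shift ` Z = Z"
    proof (intro equalityI subsetI)
      fix y assume "y \<in> shift ` Z"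
      then obtain x where x: "x \<in> Z" "y = shift x" by blast
      have "x \<in> X" using x(1) Zeq by auto
      then have "y \<in> X" using x(2) inv by (metis imageI)
      moreover have "win y j (length v) = win x (j + 1) (length v)" for j
        using x(2) win_shift[of x 1 j] by (simp add: shift_def[abs_def])
      ultimately show "y \<in> Z" using x(1) Zeq by auto
    next
      fix x assume x: "x \<in> Z"
      define x' where "x' = (\<lambda>t. x (t + (-1)))"
      have "x' \<in> X" using shift_closed_int[OF inv, of x "-1"] x Zeq by (simp add: x'_def)
      moreover have "win x' j (length v) = win x (j + (-1)) (length v)" for j
        unfolding x'_def by (rule win_shift)
      ultimately have "x' \<in> Z" using x Zeq by auto
      moreover have "shift x' = x" by (simp add: shift_def x'_def)
      ultimately show "x \<in> shift ` Z" by (metis imageI)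
    qed
  qed
  have "Z \<noteq> {}" using z Z_def by blast
  moreover have "Z \<subseteq> X" using Zeq by blast
  ultimately have "Z = X" using min[OF shZ] by blast
  obtain x i where xi: "x \<in> X" "v = win x i (length v)" using v by (auto simp: lang_iff)
  then have "x \<in> Z" using \<open>Z = X\<close> by blast
  then have "win x i (length v) \<noteq> v" using Zeq by blast
  then show False using xi(2) by simp
qed

lemma minimal_imp_irred:
  fixes A :: "'a set" and X :: "(int \<Rightarrow> 'a) set"
  assumes finA: "finite A" and mi: "minimal_shift A X"
  shows "irreducible_shift X"
  unfolding irreducible_shift_def
proof (intro ballI)
  fix u v assume u: "u \<in> language X" and v: "v \<in> language X"
  have inv: "shift ` X = X" using mi by (auto simp: minimal_shift_def shift_space_def)
  obtain N :: nat where N: "\<forall>x\<in>X. \<exists>j. \<bar>j\<bar> \<le> int N \<and> win x j (length v) = v"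
    using minimal_imp_UR[OF finA mi v] by blast
  obtain x i where x: "x \<in> X" "u = win x i (length u)" using u by (auto simp: lang_iff)
  define d where "d = i + int (length u) + int N"
  have "(\<lambda>t. x (t + d)) \<in> X" using shift_closed_int[OF inv x(1)] by simp
  then obtain j where j: "\<bar>j\<bar> \<le> int N" "win (\<lambda>t. x (t + d)) j (length v) = v" using N by blast
  define g where "g = nat (j + int N)"
  have gj: "int g = j + int N" using j(1) by (simp add: g_def)
  have vx: "v = win x (i + int (length u) + int g) (length v)"
    using j(2) gj by (simp add: win_shift d_def algebra_simps)
  have e1: "win x i (length u + g + length v) = win x i (length u + g) @ win x (i + int (length u + g)) (length v)"
    by (rule win_add)
  have e2: "win x i (length u + g) = win x i (length u) @ win x (i + int (length u)) g" by (rule win_add)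
  have e3: "i + int (length u + g) = i + int (length u) + int g" by simp
  have "win x i (length u + g + length v) = u @ win x (i + int (length u)) g @ v"
    unfolding e1 e2 e3 using x(2) vx by (metis append_assoc)
  moreover have "win x i (length u + g + length v) \<in> language X" using x(1) by (auto simp: lang_iff)
  ultimately show "\<exists>w. u @ w @ v \<in> language X" by metis
qed

theorem mainTheorem13:
  fixes A :: "'a set" and X :: "(int \<Rightarrow> 'a) set"
  assumes "finite A"
    and "shift_space A X"
    and "X \<noteq> {}"
    and "eventually_dendric X"
  shows "minimal_shift A X \<longleftrightarrow> irreducible_shift X"
proof
  assume "minimal_shift A X"
  then show "irreducible_shift X" using minimal_imp_irred[OF assms(1)] by blast
next
  assume irr: "irreducible_shift X"
  show "minimal_shift A X"
    unfolding minimal_shift_def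
    using assms irred_imp_minimal[OF assms(1) assms(2) assms(4) irr] by blast
qed


end
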